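(* Let $V=\{v_0,\dots,v_{L-1}\}$ be a set of $L\ge1$ boolean variables and let $n_0,\dots,n_t$ ($t\ge1$) be a sequence of nodes, node $n_j$ carrying a state $s_j:V\to\{0,1\}$. Let $n^c=n_t$ (child) with state $s^c=s_t$ and $n^p=n_k$ (parent) for some $k\in\{0,\dots,t-1\}$, and suppose the states of $n^p$ and $n^c$ differ in exactly $e$ variables. For a node $n=n_m$ in the sequence define $\alpha_{0:t}(n)=\frac{1}{t}\sum_{i\in\{0,\dots,t\},i\ne m}\delta(n,n_i)$ with $\delta(n_m,n_i)=\frac1L\sum_{l=0}^{L-1}\mathbf{1}_{s_m(v_l)\neq s_i(v_l)}$. Let $\mu_{t-1}^{min}(n^c)=\min_{0\le l\le L-1}\frac{1}{t}|\{j\in\{0,\dots,t-1\}\mid s_j(v_l)=s^c(v_l)\}|$. If $\mu_{t-1}^{min}(n^c)=0$, then $$\alpha_{0:t}(n^c)\ge\alpha_{0:t}(n^p)-\frac{t-1}{t}\,\frac{e-2}{L}.$$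
   Context: $\delta$ is the normalized Hamming distance between node states; $\alpha_{0:t}(n)$ is the average normalized Hamming distance of a node of the sequence to all other nodes. The hypothesis $\mu_{t-1}^{min}(n^c)=0$ means that some variable takes in the child's state a value never observed among the states of $n_0,\dots,n_{t-1}$. *)

theory Defs
  imports Complex_Main
begin

text \<open>States: s j l is the value of variable v_l in the state of node n_j
  (j = 0..t, l = 0..L-1).\<close>

definition delta :: "nat \<Rightarrow> (nat \<Rightarrow> nat \<Rightarrow> bool) \<Rightarrow> nat \<Rightarrow> nat \<Rightarrow> real" where
  "delta L s m i = (1 / real L) * (\<Sum>l<L. if s m l \<noteq> s i l then 1 else 0)"

definition alpha :: "nat \<Rightarrow> nat \<Rightarrow> (nat \<Rightarrow> nat \<Rightarrow> bool) \<Rightarrow> nat \<Rightarrow> real" where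
  "alpha L t s m = (1 / real t) * (\<Sum>i\<in>{0..t} - {m}. delta L s m i)"

definition mu_min :: "nat \<Rightarrow> nat \<Rightarrow> (nat \<Rightarrow> nat \<Rightarrow> bool) \<Rightarrow> real" where
  "mu_min L t s = Min ((\<lambda>l. (1 / real t) * real (card {j\<in>{0..<t}. s j l = s t l})) ` {0..<L})"

end

theory Submission
  imports Defs
begin

theorem theorem6:
  fixes L t k e :: nat and s :: "nat \<Rightarrow> nat \<Rightarrow> bool"
  assumes "L \<ge> 1" and "t \<ge> 1" and "k < t"
    and "e = card {l\<in>{0..<L}. s k l \<noteq> s t l}"
    and "mu_min L t s = 0"
  shows "alpha L t s t \<ge> alpha L t s k - (real t - 1) / real t * ((real e - 2) / real L)"
proof -
  define c where "c m i = (\<Sum>l<L. if s m l \<noteq> s i l then 1 else 0 :: real)" for m i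
  have dl: "delta L s m i = c m i / real L" for m i
    unfolding delta_def c_def by simp
  have fin: "finite ((\<lambda>l. (1 / real t) * real (card {j\<in>{0..<t}. s j l = s t l})) ` {0..<L})" by simp
  have ne: "((\<lambda>l. (1 / real t) * real (card {j\<in>{0..<t}. s j l = s t l})) ` {0..<L}) \<noteq> {}"
    using assms(1) by auto
  from Min_in[OF fin ne] assms(5) obtain l0 where l0: "l0 < L"
    and z: "(1 / real t) * real (card {j\<in>{0..<t}. s j l0 = s t l0}) = 0"
    unfolding mu_min_def by auto
  have "card {j\<in>{0..<t}. s j l0 = s t l0} = 0" using z assms(2) by simp
  hence "{j\<in>{0..<t}. s j l0 = s t l0} = {}" by simp
  hence nz: "\<And>j. j < t \<Longrightarrow> s j l0 \<noteq> s t l0" by auto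
  have ce: "real e = c k t"
  proof -
    have "c k t = (\<Sum>l\<in>{..<L}. if l \<in> {l\<in>{0..<L}. s k l \<noteq> s t l} then 1 else 0 :: real)"
      unfolding c_def by (rule sum.cong) auto
    also have "\<dots> = real (card {l\<in>{0..<L}. s k l \<noteq> s t l})"
      by (subst sum.If_cases) (auto intro!: arg_cong[where f="\<lambda>A. real (card A)"] arg_cong[where f=card])
    finally show ?thesis using assms(4) by simp
  qed
  have key: "c k i \<le> c t i + c k t - 2" if "i < t" for i
  proof -
    have A: "c m n = (if s m l0 \<noteq> s n l0 then 1 else 0) + (\<Sum>l\<in>{..<L}-{l0}. if s m l \<noteq> s n l then 1 else 0 :: real)" for m n
      unfolding c_def using l0 by (simp add: sum.remove)
    have B: "(\<Sum>l\<in>{..<L}-{l0}. if s k l \<noteq> s i l then 1 else 0 :: real) \<le>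
      (\<Sum>l\<in>{..<L}-{l0}. (if s t l \<noteq> s i l then 1 else 0) + (if s k l \<noteq> s t l then 1 else 0 :: real))"
      by (rule sum_mono) auto
    have C: "s k l0 \<noteq> s t l0" "s i l0 \<noteq> s t l0" using nz assms(3) that by auto
    show ?thesis using B C unfolding A[of k i] A[of t i] A[of k t] sum.distrib by auto
  qed
  have S1: "{0..t} - {t} = {..<t}" by auto
  have S2: "{0..t} - {k} = insert t ({..<t} - {k})" using assms(3) by auto
  have S3: "{..<t} = insert k ({..<t} - {k})" using assms(3) by auto
  have at: "alpha L t s t = (c t k + (\<Sum>i\<in>{..<t}-{k}. c t i)) / (real t * real L)"
    unfolding alpha_def dl S1 by (subst S3, subst sum.insert) (auto simp: sum_divide_distrib[symmetric] add_divide_distrib[symmetric] divide_divide_eq_left mult.commute)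
  have ak: "alpha L t s k = (c k t + (\<Sum>i\<in>{..<t}-{k}. c k i)) / (real t * real L)"
    unfolding alpha_def dl S2 by (subst sum.insert) (auto simp: sum_divide_distrib[symmetric] add_divide_distrib[symmetric] divide_divide_eq_left mult.commute)
  have ctk: "c t k = c k t" unfolding c_def by (rule sum.cong) auto
  have card: "card ({..<t}-{k}) = t - 1" using assms(3) by simp
  have "(\<Sum>i\<in>{..<t}-{k}. c k i) \<le> (\<Sum>i\<in>{..<t}-{k}. c t i + c k t - 2)"
    by (rule sum_mono) (use key in auto)
  also have "\<dots> = (\<Sum>i\<in>{..<t}-{k}. c t i) + (real t - 1) * (c k t - 2)"
    using card assms(2) by (simp add: sum.distrib sum_subtractf of_nat_diff algebra_simps)
  finally have M: "(\<Sum>i\<in>{..<t}-{k}. c k i) \<le> (\<Sum>i\<in>{..<t}-{k}. c t i) + (real t - 1) * (c k t - 2)" .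
  have pos: "real t * real L > 0" using assms(1,2) by simp
  have "alpha L t s k - (real t - 1) / real t * ((real e - 2) / real L)
      = (c k t + (\<Sum>i\<in>{..<t}-{k}. c k i) - (real t - 1) * (c k t - 2)) / (real t * real L)"
    unfolding ak ce using pos by (simp add: field_simps add_divide_distrib[symmetric])
  also have "\<dots> \<le> alpha L t s t"
    unfolding at ctk using M pos by (simp add: divide_right_mono)
  finally show ?thesis .
qed

end
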